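(* Let $G$ be a connected graph on $X$. For every $k\ge1$, the collection $\mathcal C_k$ is chain-vanishing. In particular, if $G$ is multi-ended, the collection of thin cuts is chain-vanishing.
   Context: A graph on $X$ is an irreflexive symmetric relation $G\subseteq X^2$. For $A\subseteq X$, $\delta A$ is the set of edges with one endpoint in $A$ and the other in $X\setminus A$. A cut is a set $A\subseteq X$ with $A$ and $X\setminus A$ infinite and $\delta A$ finite; $G$ is multi-ended if it has a cut; a cut is thin if $|\delta A|$ is minimal among all cuts. A cut $A$ is neat if the induced subgraphs on $A$ and on $X\setminus A$ are connected; $\mathcal C_k$ is the set of neat cuts $A$ with $|\delta A|=k$. A chain is a sequence $(A_n)_{n\in\mathbb N}$ strictly increasing or strictly decreasing under inclusion. For a collection $\mathcal S$ of subsets, a decreasing (resp. increasing) chain is $\mathcal S$-vanishing if there is no $B\in\mathcal S$ with $B\subseteq A_n$ (resp. $B\cap A_n=\emptyset$) for all $n$; $\mathcal S$ is chain-vanishing if every chain of members of $\mathcal S$ is $\mathcal S$-vanishing. *)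

theory Defs
  imports Main
begin

text \<open>A graph on the vertex set X (taken to be the whole type 'a) is an
irreflexive symmetric relation.\<close>
definition graph :: "('a \<times> 'a) set \<Rightarrow> bool" where
  "graph G \<longleftrightarrow> irrefl G \<and> sym G"

definition connected_graph :: "('a \<times> 'a) set \<Rightarrow> bool" where
  "connected_graph G \<longleftrightarrow> graph G \<and> (\<forall>x y. (x, y) \<in> G\<^sup>*)"

definition induced_connected :: "('a \<times> 'a) set \<Rightarrow> 'a set \<Rightarrow> bool" where
  "induced_connected G A \<longleftrightarrow> (\<forall>x\<in>A. \<forall>y\<in>A. (x, y) \<in> (G \<inter> (A \<times> A))\<^sup>*)"

text \<open>Edge boundary: each (unordered) edge between A and its complement is
represented once, as the ordered pair with first component in A.\<close>
definition delta :: "('a \<times> 'a) set \<Rightarrow> 'a set \<Rightarrow> ('a \<times> 'a) set" where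
  "delta G A = {(x, y). (x, y) \<in> G \<and> x \<in> A \<and> y \<notin> A}"

definition is_cut :: "('a \<times> 'a) set \<Rightarrow> 'a set \<Rightarrow> bool" where
  "is_cut G A \<longleftrightarrow> infinite A \<and> infinite (- A) \<and> finite (delta G A)"

definition multi_ended :: "('a \<times> 'a) set \<Rightarrow> bool" where
  "multi_ended G \<longleftrightarrow> (\<exists>A. is_cut G A)"

definition thin_cut :: "('a \<times> 'a) set \<Rightarrow> 'a set \<Rightarrow> bool" where
  "thin_cut G A \<longleftrightarrow> is_cut G A \<and> (\<forall>B. is_cut G B \<longrightarrow> card (delta G A) \<le> card (delta G B))"

definition neat_cut :: "('a \<times> 'a) set \<Rightarrow> 'a set \<Rightarrow> bool" where
  "neat_cut G A \<longleftrightarrow> is_cut G A \<and> induced_connected G A \<and> induced_connected G (- A)"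

definition neat_cuts :: "('a \<times> 'a) set \<Rightarrow> nat \<Rightarrow> 'a set set" where
  "neat_cuts G k = {A. neat_cut G A \<and> card (delta G A) = k}"

definition incr_chain :: "(nat \<Rightarrow> 'a set) \<Rightarrow> bool" where
  "incr_chain A \<longleftrightarrow> (\<forall>n. A n \<subset> A (Suc n))"

definition decr_chain :: "(nat \<Rightarrow> 'a set) \<Rightarrow> bool" where
  "decr_chain A \<longleftrightarrow> (\<forall>n. A (Suc n) \<subset> A n)"

definition chain_seq :: "(nat \<Rightarrow> 'a set) \<Rightarrow> bool" where
  "chain_seq A \<longleftrightarrow> incr_chain A \<or> decr_chain A"

definition vanishing :: "'a set set \<Rightarrow> (nat \<Rightarrow> 'a set) \<Rightarrow> bool" where
  "vanishing S A \<longleftrightarrow>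
     (decr_chain A \<longrightarrow> \<not> (\<exists>B\<in>S. \<forall>n. B \<subseteq> A n)) \<and>
     (incr_chain A \<longrightarrow> \<not> (\<exists>B\<in>S. \<forall>n. B \<inter> A n = {}))"

definition chain_vanishing :: "'a set set \<Rightarrow> bool" where
  "chain_vanishing S \<longleftrightarrow> (\<forall>A. chain_seq A \<and> (\<forall>n. A n \<in> S) \<longrightarrow> vanishing S A)"

end

theory Submission
  imports Defs
begin

lemma finite_path:
  assumes "(b,c) \<in> G\<^sup>*"
  shows "\<exists>F. finite F \<and> F \<subseteq> G \<and> (b,c) \<in> F\<^sup>*"
  using assms
proof (induction rule: rtrancl_induct)
  case base
  then show ?case by (rule exI[of _ "{}"]) auto
next
  case (step y z)
  then obtain F where F: "finite F" "F \<subseteq> G" "(b,y) \<in> F\<^sup>*" by blast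
  have "(b,y) \<in> (insert (y,z) F)\<^sup>*" using F(3) rtrancl_mono[of F "insert (y,z) F"] by blast
  then have "(b,z) \<in> (insert (y,z) F)\<^sup>*" by (rule rtrancl_into_rtrancl) simp
  then show ?case using F step(2) by (intro exI[of _ "insert (y,z) F"]) auto
qed

lemma crossing:
  assumes "(b,c) \<in> R\<^sup>*" "b \<in> A" "c \<notin> A"
  shows "\<exists>x y. (x,y) \<in> R \<and> x \<in> A \<and> y \<notin> A"
  using assms
proof (induction arbitrary: rule: rtrancl_induct)
  case base
  then show ?case by simp
next
  case (step y z)
  then show ?case by (cases "y \<in> A") auto
qed

lemma decr_le:
  assumes "\<forall>n. A (Suc n) \<subset> A n" "n \<le> m"
  shows "A m \<subseteq> A n"
  using assms(2)
proof (induction rule: dec_induct)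
  case base then show ?case by simp
next
  case (step m) then show ?case using assms(1) by blast
qed

lemma core:
  fixes k :: nat
  shows "\<And>G A c. (\<forall>n. A (Suc n) \<subset> A n) \<Longrightarrow>
     (\<forall>n. finite (delta G (A n)) \<and> card (delta G (A n)) \<le> k) \<Longrightarrow>
     (\<forall>n. induced_connected G (A n) \<and> induced_connected G (- A n)) \<Longrightarrow>
     (\<forall>n. b \<in> A n) \<Longrightarrow> c \<notin> A 0 \<Longrightarrow> (b,c) \<in> G\<^sup>* \<Longrightarrow> False"
proof (induction k)
  case (0 G A c)
  have h: "finite (delta G (A 0))" "card (delta G (A 0)) \<le> 0" using 0(2)[rule_format, of 0] by simp_all
  then have e: "delta G (A 0) = {}" by simp
  obtain x y where "(x,y) \<in> G" "x \<in> A 0" "y \<notin> A 0"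
    using crossing[OF 0(6)] 0(4)[rule_format, of 0] 0(5) by blast
  then have "(x,y) \<in> delta G (A 0)" unfolding delta_def by simp
  then show False using e by simp
next
  case (Suc k G A c)
  note dec = Suc.prems(1)
  obtain F where F: "finite F" "F \<subseteq> G" "(b,c) \<in> F\<^sup>*" using finite_path[OF Suc.prems(6)] by blast
  have "\<forall>n. \<exists>e. e \<in> F \<and> e \<in> delta G (A n)"
  proof
    fix n
    have "c \<notin> A n" using decr_le[OF dec, of 0 n] Suc.prems(5) by auto
    then obtain x y where "(x,y) \<in> F" "x \<in> A n" "y \<notin> A n"
      using crossing[OF F(3) Suc.prems(4)[rule_format, of n]] by blast
    then show "\<exists>e. e \<in> F \<and> e \<in> delta G (A n)" using F(2) unfolding delta_def by blast
  qed
  then obtain f where f: "\<And>n. f n \<in> F \<and> f n \<in> delta G (A n)" by metis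
  have "finite (f ` UNIV)" using f F(1) by (meson finite_subset image_subsetI)
  then obtain n0 where inf: "infinite {n \<in> UNIV. f n = f n0}"
    using pigeonhole_infinite[of "UNIV::nat set" f] by auto
  obtain x y where e: "f n0 = (x,y)" by fastforce
  have xall: "x \<in> A n" for n
  proof -
    have "\<not> {n \<in> UNIV. f n = f n0} \<subseteq> {..<n}"
      using inf finite_subset[of _ "{..<n}"] by blast
    then obtain m where m1: "m \<in> {n \<in> UNIV. f n = f n0}" and m2: "m \<notin> {..<n}"
      by blast
    from m2 have "m \<ge> n" by simp
    then have "x \<in> A m" using f[of m] e m1 unfolding delta_def by auto
    then show ?thesis using decr_le[OF dec \<open>m \<ge> n\<close>] by blast
  qed
  define N where "N = n0"
  have yN: "y \<notin> A n" if "n \<ge> N" for n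
    using f[of n0] e decr_le[OF dec that] unfolding delta_def N_def by auto
  have GxyG: "(x,y) \<in> G" using f[of n0] e unfolding delta_def by auto
  define G' where "G' = G - {(x,y),(y,x)}"
  define A' where "A' n = A (n + N)" for n
  have dA: "delta G' (A' n) = delta G (A' n) - {(x,y)}" for n
    using yN[of "n+N"] unfolding delta_def G'_def A'_def by auto
  have xyin: "(x,y) \<in> delta G (A' n)" for n
    using xall[of "n+N"] yN[of "n+N"] GxyG unfolding delta_def A'_def by auto
  have card': "finite (delta G' (A' n)) \<and> card (delta G' (A' n)) \<le> k" for n
  proof -
    have "finite (delta G (A' n))" "card (delta G (A' n)) \<le> Suc k"
      using Suc.prems(2) unfolding A'_def by auto
    then show ?thesis using dA[of n] xyin[of n] by auto
  qed
  have restr: "G' \<inter> (S \<times> S) = G \<inter> (S \<times> S)" if "x \<in> S \<and> y \<notin> S \<or> x \<notin> S \<and> y \<in> S" for S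
    using that unfolding G'_def by auto
  have icA': "induced_connected G' (A' n) \<and> induced_connected G' (- A' n)" for n
  proof -
    have "G' \<inter> (A' n \<times> A' n) = G \<inter> (A' n \<times> A' n)"
      using restr xall[of "n+N"] yN[of "n+N"] unfolding A'_def by auto
    moreover have "G' \<inter> ((- A' n) \<times> (- A' n)) = G \<inter> ((- A' n) \<times> (- A' n))"
      using restr[of "- A' n"] xall[of "n+N"] yN[of "n+N"] unfolding A'_def by auto
    ultimately show ?thesis using Suc.prems(3) unfolding induced_connected_def A'_def by simp
  qed
  have dec': "\<forall>n. A' (Suc n) \<subset> A' n" using dec unfolding A'_def by simp
  have path': "(b,c) \<in> G'\<^sup>*"
  proof -
    obtain d where d: "d \<in> A' 0" "d \<notin> A' 1" using dec'[rule_format, of 0] by auto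
    have "b \<in> A' 0" using Suc.prems(4) unfolding A'_def by auto
    then have "(b,d) \<in> (G' \<inter> (A' 0 \<times> A' 0))\<^sup>*"
      using icA'[of 0] d unfolding induced_connected_def by blast
    then have bd: "(b,d) \<in> G'\<^sup>*" using rtrancl_mono[of "G' \<inter> (A' 0 \<times> A' 0)" G'] by blast
    have "c \<notin> A' 1" using decr_le[OF dec, of 0 "1+N"] Suc.prems(5) unfolding A'_def by auto
    then have "(d,c) \<in> (G' \<inter> ((- A' 1) \<times> (- A' 1)))\<^sup>*"
      using icA'[of 1] d unfolding induced_connected_def by blast
    then have "(d,c) \<in> G'\<^sup>*" using rtrancl_mono[of "G' \<inter> ((- A' 1) \<times> (- A' 1))" G'] by blast
    then show ?thesis using bd by simp
  qed
  have "c \<notin> A' 0" using decr_le[OF dec, of 0 N] Suc.prems(5) unfolding A'_def by auto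
  moreover have "\<forall>n. b \<in> A' n" using Suc.prems(4) unfolding A'_def by auto
  ultimately show False
    using Suc.IH[of A' G' c] dec' card' icA' path' by blast
qed

lemma delta_compl:
  assumes "sym G"
  shows "delta G (- A) = prod.swap ` delta G A"
  using assms unfolding delta_def sym_def by (auto simp: image_iff)

lemma delta_compl_card:
  assumes "sym G"
  shows "finite (delta G (- A)) = finite (delta G A) \<and> card (delta G (- A)) = card (delta G A)"
  using delta_compl[OF assms] by (simp add: card_image finite_image_iff)

lemma gen:
  fixes G :: "('a \<times> 'a) set"
  assumes conn: "connected_graph G"
    and S: "\<And>A. A \<in> S \<Longrightarrow> is_cut G A \<and> induced_connected G A \<and> induced_connected G (- A) \<and> card (delta G A) \<le> k"
  shows "chain_vanishing S"
  unfolding chain_vanishing_def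
proof (intro allI impI)
  fix A assume H: "chain_seq A \<and> (\<forall>n. A n \<in> S)"
  have sym: "sym G" using conn unfolding connected_graph_def graph_def by auto
  have path: "(u,v) \<in> G\<^sup>*" for u v using conn unfolding connected_graph_def by auto
  show "vanishing S A"
    unfolding vanishing_def
  proof (intro conjI impI notI)
    assume dc: "decr_chain A" and "\<exists>B\<in>S. \<forall>n. B \<subseteq> A n"
    then obtain B where B: "B \<in> S" "\<forall>n. B \<subseteq> A n" by blast
    have "infinite B" using S[OF B(1)] unfolding is_cut_def by simp
    then obtain b where "b \<in> B" using infinite_imp_nonempty by blast
    have "infinite (- A 0)" using S[of "A 0"] H unfolding is_cut_def by simp
    then obtain c where "c \<in> - A 0" using infinite_imp_nonempty by blast
    show False
      apply (rule core[where A=A and k=k and G=G and b=b and c=c])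
      using dc \<open>b \<in> B\<close> B(2) \<open>c \<in> - A 0\<close> path H S unfolding decr_chain_def is_cut_def by blast+
  next
    assume ic: "incr_chain A" and "\<exists>B\<in>S. \<forall>n. B \<inter> A n = {}"
    then obtain B where B: "B \<in> S" "\<forall>n. B \<inter> A n = {}" by blast
    have "infinite B" using S[OF B(1)] unfolding is_cut_def by simp
    then obtain b where "b \<in> B" using infinite_imp_nonempty by blast
    have "infinite (A 0)" using S[of "A 0"] H unfolding is_cut_def by simp
    then obtain c where "c \<in> A 0" using infinite_imp_nonempty by blast
    have d1: "\<forall>n. - A (Suc n) \<subset> - A n" using ic unfolding incr_chain_def by blast
    have d2: "\<forall>n. finite (delta G (- A n)) \<and> card (delta G (- A n)) \<le> k"
      using delta_compl_card[OF sym] S H unfolding is_cut_def by metis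
    have d3: "\<forall>n. induced_connected G (- A n) \<and> induced_connected G (- (- A n))"
      using S H by simp
    show False
      apply (rule core[where A="\<lambda>n. - A n" and k=k and G=G and b=b and c=c])
      using d1 d2 d3 \<open>b \<in> B\<close> B(2) \<open>c \<in> A 0\<close> path by blast+
  qed
qed

lemma thin_compl:
  assumes "sym G" "thin_cut G A"
  shows "thin_cut G (- A)"
  using assms delta_compl_card[OF assms(1), of A] unfolding thin_cut_def is_cut_def by auto

lemma thin_ic:
  assumes conn: "connected_graph G" and th: "thin_cut G A"
  shows "induced_connected G A"
  unfolding induced_connected_def
proof (intro ballI, rule ccontr)
  fix x y assume xA: "x \<in> A" and yA: "y \<in> A" and np: "(x,y) \<notin> (G \<inter> A \<times> A)\<^sup>*"
  have sym: "sym G" using conn unfolding connected_graph_def graph_def by auto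
  have path: "(u,v) \<in> G\<^sup>*" for u v using conn unfolding connected_graph_def by auto
  define C where "C = {z \<in> A. (x,z) \<in> (G \<inter> A \<times> A)\<^sup>*}"
  define D where "D = A - C"
  have xC: "x \<in> C" using xA unfolding C_def by auto
  have yD: "y \<in> D" using yA np unfolding C_def D_def by auto
  have cut: "is_cut G A" using th unfolding thin_cut_def by auto
  have "infinite (- A)" using cut unfolding is_cut_def by simp
  then obtain w where w: "w \<in> - A" using infinite_imp_nonempty by blast
  have dC: "delta G C \<subseteq> delta G A"
  proof
    fix p assume "p \<in> delta G C"
    then obtain u v where p: "p = (u,v)" "(u,v) \<in> G" "u \<in> C" "v \<notin> C" unfolding delta_def by auto
    have "v \<notin> A"
    proof
      assume "v \<in> A"
      then have "(x,v) \<in> (G \<inter> A \<times> A)\<^sup>*" using p C_def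
        by (auto intro: rtrancl_into_rtrancl)
      then show False using p \<open>v \<in> A\<close> unfolding C_def by auto
    qed
    then show "p \<in> delta G A" using p C_def unfolding delta_def by auto
  qed
  have dD: "delta G D \<subseteq> delta G A"
  proof
    fix p assume "p \<in> delta G D"
    then obtain u v where p: "p = (u,v)" "(u,v) \<in> G" "u \<in> D" "v \<notin> D" unfolding delta_def by auto
    have "v \<notin> A"
    proof
      assume "v \<in> A"
      then have "v \<in> C" using p D_def by auto
      then have "(x,v) \<in> (G \<inter> A \<times> A)\<^sup>*" "(v,u) \<in> G \<inter> A \<times> A"
        using p sym \<open>v \<in> A\<close> unfolding C_def D_def sym_def by auto
      then have "(x,u) \<in> (G \<inter> A \<times> A)\<^sup>*" by (rule rtrancl_into_rtrancl)
      then show False using p unfolding C_def D_def by auto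
    qed
    then show "p \<in> delta G A" using p D_def unfolding delta_def by auto
  qed
  have disj: "delta G C \<inter> delta G D = {}" unfolding delta_def D_def by auto
  have neC: "delta G C \<noteq> {}"
  proof -
    have "w \<notin> C" using w C_def by auto
    then obtain u v where "(u,v) \<in> G" "u \<in> C" "v \<notin> C" using crossing[OF path[of x w]] xC by blast
    then show ?thesis unfolding delta_def by auto
  qed
  have neD: "delta G D \<noteq> {}"
  proof -
    have "w \<notin> D" using w D_def by auto
    then obtain u v where "(u,v) \<in> G" "u \<in> D" "v \<notin> D" using crossing[OF path[of y w]] yD by blast
    then show ?thesis unfolding delta_def by auto
  qed
  have fA: "finite (delta G A)" using cut unfolding is_cut_def by auto
  have smaller: "card (delta G E) < card (delta G A)" if "E = C \<or> E = D" for E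
  proof -
    have "delta G E \<subset> delta G A" using that dC dD disj neC neD by blast
    then show ?thesis using fA psubset_card_mono by blast
  qed
  have cutE: "is_cut G E" if "E = C \<or> E = D" "infinite E" for E
  proof -
    have "E \<subseteq> A" using that C_def D_def by auto
    then have "infinite (- E)" using cut unfolding is_cut_def
      by (meson compl_le_compl_iff finite_subset)
    moreover have "finite (delta G E)" using that dC dD fA finite_subset by blast
    ultimately show ?thesis using that unfolding is_cut_def by auto
  qed
  have "A = C \<union> D" unfolding C_def D_def by auto
  then have "infinite C \<or> infinite D" using cut unfolding is_cut_def by auto
  then obtain E where E: "E = C \<or> E = D" "infinite E" by blast
  have "card (delta G A) \<le> card (delta G E)" using th cutE[OF E] unfolding thin_cut_def by auto
  then show False using smaller[OF E(1)] by simp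
qed

theorem mainTheorem15:
  fixes G :: "('a \<times> 'a) set"
  assumes "connected_graph G"
  shows "(\<forall>k::nat. k \<ge> 1 \<longrightarrow> chain_vanishing (neat_cuts G k))
         \<and> (multi_ended G \<longrightarrow> chain_vanishing {A. thin_cut G A})"
proof (intro conjI allI impI)
  fix k :: nat
  show "chain_vanishing (neat_cuts G k)"
    by (rule gen[OF assms, of _ k]) (auto simp: neat_cuts_def neat_cut_def)
next
  have sym: "sym G" using assms unfolding connected_graph_def graph_def by auto
  show "chain_vanishing {A. thin_cut G A}"
  proof (cases "\<exists>A0. thin_cut G A0")
    case False
    then show ?thesis unfolding chain_vanishing_def chain_seq_def by auto
  next
    case True
    then obtain A0 where A0: "thin_cut G A0" by blast
    show ?thesis
    proof (rule gen[OF assms, of _ "card (delta G A0)"])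
      fix A assume "A \<in> {A. thin_cut G A}"
      then have th: "thin_cut G A" by simp
      show "is_cut G A \<and> induced_connected G A \<and> induced_connected G (- A) \<and> card (delta G A) \<le> card (delta G A0)"
        using th thin_ic[OF assms th] thin_ic[OF assms thin_compl[OF sym th]] A0
        unfolding thin_cut_def by auto
    qed
  qed
qed

end
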